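(* Let $X$ be a random variable with CIGF $G_X$. Then $$G_X(\alpha,\beta)\le K_X(\beta)-\alpha K_X(\beta+1)\quad\text{for all }(\alpha,\beta)\in D_X\text{ with }\alpha\in[0,1],$$ $$G_X(\alpha,\beta)\le H_X(\alpha)-\beta H_X(\alpha+1)\quad\text{for all }(\alpha,\beta)\in D_X\text{ with }\beta\in[0,1].$$
   Context: For a random variable $X$ with CDF $F$ and survival function $\overline F=1-F$, let $l=\inf\{x:F(x)>0\}$, $r=\sup\{x:\overline F(x)>0\}$. The CIGF of $X$ is $G_X(\alpha,\beta)=\int_l^r [F(x)]^\alpha[\overline F(x)]^\beta\,dx$ on $D_X=\{(\alpha,\beta)\in\mathbb{R}^2: G_X(\alpha,\beta)<\infty\}$. The cumulative information generating measure is $H_X(\alpha)=G_X(\alpha,0)=\int_l^r[F(x)]^\alpha dx$ and the cumulative residual information generating measure is $K_X(\beta)=G_X(0,\beta)=\int_l^r[\overline F(x)]^\beta dx$. *)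

theory Defs
  imports "HOL-Probability.Probability"
begin

definition cigf_l :: "(real \<Rightarrow> real) \<Rightarrow> ereal" where
  "cigf_l F = Inf {ereal x | x. F x > 0}"

definition cigf_r :: "(real \<Rightarrow> real) \<Rightarrow> ereal" where
  "cigf_r F = Sup {ereal x | x. 1 - F x > 0}"

definition CIGF :: "(real \<Rightarrow> real) \<Rightarrow> real \<Rightarrow> real \<Rightarrow> ereal" where
  "CIGF F \<alpha> \<beta> = enn2ereal (\<integral>\<^sup>+ x \<in> {x. cigf_l F < ereal x \<and> ereal x < cigf_r F}.
      ennreal ((F x) powr \<alpha> * (1 - F x) powr \<beta>) \<partial>lborel)"

definition cigf_dom :: "(real \<Rightarrow> real) \<Rightarrow> (real \<times> real) set" where
  "cigf_dom F = {(\<alpha>, \<beta>). CIGF F \<alpha> \<beta> < \<infinity>}"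

definition CIGM_H :: "(real \<Rightarrow> real) \<Rightarrow> real \<Rightarrow> ereal" where
  "CIGM_H F \<alpha> = CIGF F \<alpha> 0"

definition CRIGM_K :: "(real \<Rightarrow> real) \<Rightarrow> real \<Rightarrow> ereal" where
  "CRIGM_K F \<beta> = CIGF F 0 \<beta>"

end

theory Submission
  imports Defs
begin

lemma pw1:
  fixes u a :: real
  assumes "0 \<le> u" "u \<le> 1" "0 \<le> a" "a \<le> 1"
  shows "u powr a \<le> 1 - a * (1 - u)"
proof (cases "u = 0")
  case True then show ?thesis using assms by simp
next
  case False
  then have u: "u > 0" using assms by simp
  show ?thesis
  proof (cases "a = 1")
    case True then show ?thesis using u by simp
  next
    case False
    have "u powr a * 1 powr (1 - a) \<le> a * u + (1 - a) * 1"
      by (rule Youngs_inequality_0) (use assms u False in auto)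
    then show ?thesis by (simp add: algebra_simps)
  qed
qed

lemma powr_plus1:
  fixes u a :: real
  assumes "0 \<le> u"
  shows "u powr (a + 1) = u powr a * u"
proof (cases "u = 0")
  case True then show ?thesis by simp
next
  case False then show ?thesis using assms by (simp add: powr_add)
qed

lemma ereal_arith_key:
  fixes A B :: ennreal and a :: real
  assumes "0 \<le> a"
  shows "enn2ereal A \<le> enn2ereal (A + ennreal a * B) - ereal a * enn2ereal B"
proof (cases "B = \<infinity>")
  case True
  show ?thesis
  proof (cases "a = 0")
    case True then show ?thesis by (simp add: zero_ereal_def[symmetric])
  next
    case False
    then have "ennreal a * B = \<infinity>" using True assms by (simp add: ennreal_mult_eq_top_iff)
    then show ?thesis by simp
  qed
next
  case False
  then obtain b where b: "B = ennreal b" "0 \<le> b" by (cases B) auto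
  have "enn2ereal (A + ennreal a * B) = enn2ereal A + ereal (a * b)"
    using b assms by (simp add: ennreal_mult'[symmetric] plus_ennreal.rep_eq enn2ereal_ennreal)
  moreover have "ereal a * enn2ereal B = ereal (a * b)" using b by (simp add: enn2ereal_ennreal)
  ultimately show ?thesis
    by (cases "enn2ereal A") auto
qed

lemma key:
  fixes f g h :: "real \<Rightarrow> real" and a :: real
  assumes [measurable]: "f \<in> borel_measurable borel" "g \<in> borel_measurable borel" "h \<in> borel_measurable borel"
    and a: "0 \<le> a" and f0: "\<And>x. 0 \<le> f x" and h0: "\<And>x. 0 \<le> h x"
    and le: "\<And>x. f x \<le> g x - a * h x"
  shows "enn2ereal (\<integral>\<^sup>+x. ennreal (f x) \<partial>lborel)
     \<le> enn2ereal (\<integral>\<^sup>+x. ennreal (g x) \<partial>lborel) - ereal a * enn2ereal (\<integral>\<^sup>+x. ennreal (h x) \<partial>lborel)"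
proof -
  have "(\<integral>\<^sup>+x. ennreal (g x) \<partial>lborel) = (\<integral>\<^sup>+x. ennreal (g x - a * h x) + ennreal a * ennreal (h x) \<partial>lborel)"
  proof (rule nn_integral_cong)
    fix x
    have "0 \<le> g x - a * h x" using f0[of x] le[of x] by linarith
    then show "ennreal (g x) = ennreal (g x - a * h x) + ennreal a * ennreal (h x)"
      using a h0[of x] by (simp add: ennreal_mult'[symmetric] ennreal_plus[symmetric] del: ennreal_plus)
  qed
  also have "\<dots> = (\<integral>\<^sup>+x. ennreal (g x - a * h x) \<partial>lborel) + ennreal a * (\<integral>\<^sup>+x. ennreal (h x) \<partial>lborel)"
    by (simp add: nn_integral_add nn_integral_cmult)
  finally have eq: "(\<integral>\<^sup>+x. ennreal (g x) \<partial>lborel) = (\<integral>\<^sup>+x. ennreal (g x - a * h x) \<partial>lborel) + ennreal a * (\<integral>\<^sup>+x. ennreal (h x) \<partial>lborel)" .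
  have mono: "(\<integral>\<^sup>+x. ennreal (f x) \<partial>lborel) \<le> (\<integral>\<^sup>+x. ennreal (g x - a * h x) \<partial>lborel)"
    by (rule nn_integral_mono) (use le in \<open>simp add: ennreal_leI\<close>)
  have "enn2ereal (\<integral>\<^sup>+x. ennreal (f x) \<partial>lborel) \<le> enn2ereal (\<integral>\<^sup>+x. ennreal (g x - a * h x) \<partial>lborel)"
    using mono by (simp add: less_eq_ennreal.rep_eq)
  also have "\<dots> \<le> enn2ereal (\<integral>\<^sup>+x. ennreal (g x) \<partial>lborel) - ereal a * enn2ereal (\<integral>\<^sup>+x. ennreal (h x) \<partial>lborel)"
    unfolding eq by (rule ereal_arith_key[OF a])
  finally show ?thesis .
qed

lemma set_to_ind:
  "(\<integral>\<^sup>+x\<in>S. ennreal (P x) \<partial>lborel) = (\<integral>\<^sup>+x. ennreal (P x * indicator S x) \<partial>lborel)"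
  by (rule nn_integral_cong) (simp split: split_indicator)

lemma main:
  fixes F :: "real \<Rightarrow> real"
  assumes mono: "mono F" and F0: "\<And>x. 0 \<le> F x" and F1: "\<And>x. F x \<le> 1"
  shows "(\<forall>\<alpha> \<beta>. (\<alpha>, \<beta>) \<in> cigf_dom F \<and> \<alpha> \<in> {0..1} \<longrightarrow>
            CIGF F \<alpha> \<beta> \<le> CRIGM_K F \<beta> - ereal \<alpha> * CRIGM_K F (\<beta> + 1))
       \<and> (\<forall>\<alpha> \<beta>. (\<alpha>, \<beta>) \<in> cigf_dom F \<and> \<beta> \<in> {0..1} \<longrightarrow>
            CIGF F \<alpha> \<beta> \<le> CIGM_H F \<alpha> - ereal \<beta> * CIGM_H F (\<alpha> + 1))"
proof -
  define S where "S = {x. cigf_l F < ereal x \<and> ereal x < cigf_r F}"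
  have Fm[measurable]: "F \<in> borel_measurable borel" using borel_measurable_mono[OF mono] .
  have Sm[measurable]: "S \<in> sets borel" unfolding S_def by measurable
  have G: "CIGF F a b = enn2ereal (\<integral>\<^sup>+x. ennreal ((F x) powr a * (1 - F x) powr b * indicator S x) \<partial>lborel)" for a b
    unfolding CIGF_def S_def[symmetric] by (simp add: set_to_ind)
  have inS: "0 < F x \<and> F x < 1" if "x \<in> S" for x
  proof
    have "cigf_l F < ereal x" using that by (simp add: S_def)
    then obtain y where "y \<in> {ereal x | x. F x > 0}" "y < ereal x"
      unfolding cigf_l_def by (auto simp: Inf_less_iff)
    then obtain z where "F z > 0" "z < x" by auto
    then show "0 < F x" using mono by (smt (verit) monoD)
  next
    have "ereal x < cigf_r F" using that by (simp add: S_def)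
    then obtain y where "y \<in> {ereal x | x. 1 - F x > 0}" "ereal x < y"
      unfolding cigf_r_def by (auto simp: less_Sup_iff)
    then obtain z where "1 - F z > 0" "x < z" by auto
    then show "F x < 1" using mono by (smt (verit) monoD)
  qed
  show ?thesis
  proof (intro conjI allI impI)
    fix a b assume ab: "(a, b) \<in> cigf_dom F \<and> a \<in> {0..1}"
    show "CIGF F a b \<le> CRIGM_K F b - ereal a * CRIGM_K F (b + 1)"
      unfolding CRIGM_K_def G
    proof (rule key)
      fix x
      show "F x powr a * (1 - F x) powr b * indicator S x \<le>
        F x powr 0 * (1 - F x) powr b * indicator S x - a * (F x powr 0 * (1 - F x) powr (b + 1) * indicator S x)"
      proof (cases "x \<in> S")
        case True
        then have x: "0 < F x" "F x < 1" using inS by auto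
        have p: "F x powr a \<le> 1 - a * (1 - F x)" using pw1[OF F0 F1, of a] ab by auto
        have q: "0 \<le> (1 - F x) powr b" by simp
        have "F x powr a * (1 - F x) powr b \<le> (1 - a * (1 - F x)) * (1 - F x) powr b"
          using mult_right_mono[OF p q] .
        also have "\<dots> = (1 - F x) powr b - a * (1 - F x) powr (b + 1)"
          using F1[of x] powr_plus1[of "1 - F x" b] by (simp only:) (simp add: algebra_simps)
        finally show ?thesis using True x by simp
      qed simp
    qed (use ab in \<open>auto\<close>)
  next
    fix a b assume ab: "(a, b) \<in> cigf_dom F \<and> b \<in> {0..1}"
    show "CIGF F a b \<le> CIGM_H F a - ereal b * CIGM_H F (a + 1)"
      unfolding CIGM_H_def G
    proof (rule key)
      fix x
      show "F x powr a * (1 - F x) powr b * indicator S x \<le>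
        F x powr a * (1 - F x) powr 0 * indicator S x - b * (F x powr (a + 1) * (1 - F x) powr 0 * indicator S x)"
      proof (cases "x \<in> S")
        case True
        then have x: "0 < F x" "F x < 1" using inS by auto
        have p: "(1 - F x) powr b \<le> 1 - b * (1 - (1 - F x))" using pw1[of "1 - F x" b] F0[of x] F1[of x] ab by auto
        have q: "0 \<le> F x powr a" by simp
        have "F x powr a * (1 - F x) powr b \<le> F x powr a * (1 - b * (1 - (1 - F x)))"
          using mult_left_mono[OF p q] .
        also have "\<dots> = F x powr a - b * F x powr (a + 1)"
          using F0[of x] powr_plus1[of "F x" a] by (simp only:) (simp add: algebra_simps)
        finally show ?thesis using True x by simp
      qed simp
    qed (use ab in \<open>auto\<close>)
  qed
qed

theorem proposition5:
  fixes M :: "'a measure" and X :: "'a \<Rightarrow> real"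
  assumes "prob_space M" and "X \<in> borel_measurable M"
  shows "(\<forall>\<alpha> \<beta>. (\<alpha>, \<beta>) \<in> cigf_dom (cdf (distr M borel X)) \<and> \<alpha> \<in> {0..1} \<longrightarrow>
            CIGF (cdf (distr M borel X)) \<alpha> \<beta>
              \<le> CRIGM_K (cdf (distr M borel X)) \<beta>
                 - ereal \<alpha> * CRIGM_K (cdf (distr M borel X)) (\<beta> + 1))
       \<and> (\<forall>\<alpha> \<beta>. (\<alpha>, \<beta>) \<in> cigf_dom (cdf (distr M borel X)) \<and> \<beta> \<in> {0..1} \<longrightarrow>
            CIGF (cdf (distr M borel X)) \<alpha> \<beta>
              \<le> CIGM_H (cdf (distr M borel X)) \<alpha>
                 - ereal \<beta> * CIGM_H (cdf (distr M borel X)) (\<alpha> + 1))"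
proof -
  interpret R: real_distribution "distr M borel X"
    using prob_space.real_distribution_distr[OF assms(1)] assms(2) by simp
  show ?thesis
    by (rule main) (auto simp: mono_def R.cdf_nondecreasing R.cdf_nonneg R.cdf_bounded_prob)
qed

end
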